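(* Let $k\in \mathbb{N}$. A tournament $T$ is $k$-linked if and only if $|V(T)|\geq 2k$ and, whenever $(x_1,y_1), \dots, (x_k,y_k)$ are ordered pairs of (not necessarily distinct) vertices of $T$, there exist distinct internally vertex-disjoint paths $P_1, \dots, P_k$ such that for all $i\in \{1,\dots, k\}$, $P_i$ is a directed path from $x_i$ to $y_i$ and $\{x_1,\dots, x_k, y_1, \dots, y_k\}\cap V(P_i)=\{x_i, y_i\}$.
   Context: A tournament is an orientation of a complete graph. A tournament $T$ is $k$-linked if $|V(T)|\geq 2k$ and whenever $x_1,\dots, x_k, y_1, \dots, y_k$ are $2k$ distinct vertices of $T$ there exist vertex-disjoint directed paths $P_1,\dots, P_k$ such that $P_i$ is a directed path from $x_i$ to $y_i$ for each $i$. *)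

theory Defs
  imports Main
begin

definition tournament :: "'a set \<Rightarrow> ('a \<Rightarrow> 'a \<Rightarrow> bool) \<Rightarrow> bool" where
  "tournament V E \<longleftrightarrow> finite V
     \<and> (\<forall>u v. E u v \<longrightarrow> u \<in> V \<and> v \<in> V)
     \<and> (\<forall>u. \<not> E u u)
     \<and> (\<forall>u\<in>V. \<forall>v\<in>V. u \<noteq> v \<longrightarrow> E u v \<or> E v u)
     \<and> (\<forall>u v. E u v \<longrightarrow> \<not> E v u)"

text \<open>A directed path, given as its vertex sequence v0,...,vm: nonempty, in V,
  consecutive vertices joined by arcs, vertices pairwise distinct except
  that the first may coincide with the last (so a path from x to x is either
  the trivial path [x] or a directed cycle through x).  If the endpoints
  differ this is exactly an ordinary directed path.\<close>
definition dpath :: "'a set \<Rightarrow> ('a \<Rightarrow> 'a \<Rightarrow> bool) \<Rightarrow> 'a list \<Rightarrow> bool" where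
  "dpath V E ps \<longleftrightarrow> ps \<noteq> [] \<and> set ps \<subseteq> V
     \<and> (\<forall>i. Suc i < length ps \<longrightarrow> E (ps ! i) (ps ! Suc i))
     \<and> distinct (butlast ps) \<and> distinct (tl ps)"

definition k_linked :: "'a set \<Rightarrow> ('a \<Rightarrow> 'a \<Rightarrow> bool) \<Rightarrow> nat \<Rightarrow> bool" where
  "k_linked V E k \<longleftrightarrow> 2 * k \<le> card V
     \<and> (\<forall>x y :: nat \<Rightarrow> 'a.
          (\<forall>i\<in>{1..k}. x i \<in> V \<and> y i \<in> V)
          \<and> inj_on x {1..k} \<and> inj_on y {1..k} \<and> x ` {1..k} \<inter> y ` {1..k} = {}
          \<longrightarrow> (\<exists>P :: nat \<Rightarrow> 'a list.
                (\<forall>i\<in>{1..k}. dpath V E (P i) \<and> hd (P i) = x i \<and> last (P i) = y i)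
              \<and> (\<forall>i\<in>{1..k}. \<forall>j\<in>{1..k}. i \<noteq> j \<longrightarrow> set (P i) \<inter> set (P j) = {})))"

end

theory Submission
  imports Defs
begin


lemma dpath_distinct:
  assumes "dpath V E p" "hd p \<noteq> last p" shows "distinct p"
proof (cases p)
  case Nil then show ?thesis using assms by (simp add: dpath_def)
next
  case (Cons a r)
  show ?thesis
  proof (cases "r = []")
    case True then show ?thesis using Cons by simp
  next
    case False
    have d1: "distinct (butlast p)" "distinct (tl p)" using assms by (auto simp: dpath_def)
    have "butlast p = a # butlast r" using Cons False by simp
    then have "a \<notin> set (butlast r)" using d1 by simp
    moreover have "a \<noteq> last r" using assms Cons False by simp
    moreover have "set r = insert (last r) (set (butlast r))" using False
      by (metis append_butlast_last_id list.simps(15) rotate1.simps(2) set_rotate1)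
    ultimately show ?thesis using Cons d1 by auto
  qed
qed

lemma dpath_cons:
  assumes "dpath V E p" "v \<in> V" "E v (hd p)" "hd p \<noteq> last p" "v \<notin> set (butlast p)"
  shows "dpath V E (v # p)"
proof -
  have dp: "distinct p" using dpath_distinct assms(1,4) .
  have ne: "p \<noteq> []" using assms by (simp add: dpath_def)
  have arcs: "\<forall>i. Suc i < length (v#p) \<longrightarrow> E ((v#p) ! i) ((v#p) ! Suc i)"
  proof (intro allI impI)
    fix i assume "Suc i < length (v#p)"
    then show "E ((v#p) ! i) ((v#p) ! Suc i)"
      using assms ne by (cases i) (auto simp: dpath_def hd_conv_nth)
  qed
  show ?thesis using assms dp ne arcs by (auto simp: dpath_def distinct_butlast)
qed

lemma dpath_snoc:
  assumes "dpath V E p" "v \<in> V" "E (last p) v" "hd p \<noteq> last p" "v \<notin> set (tl p)"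
  shows "dpath V E (p @ [v])"
proof -
  have dp: "distinct p" using dpath_distinct assms(1,4) .
  have ne: "p \<noteq> []" using assms by (simp add: dpath_def)
  have arcs: "\<forall>i. Suc i < length (p@[v]) \<longrightarrow> E ((p@[v]) ! i) ((p@[v]) ! Suc i)"
  proof (intro allI impI)
    fix i assume i: "Suc i < length (p@[v])"
    show "E ((p@[v]) ! i) ((p@[v]) ! Suc i)"
    proof (cases "Suc i < length p")
      case True then show ?thesis using assms by (simp add: dpath_def nth_append)
    next
      case False
      then have "i = length p - 1" using i by simp
      then show ?thesis using assms ne False by (simp add: nth_append last_conv_nth)
    qed
  qed
  show ?thesis using assms dp ne arcs by (auto simp: dpath_def distinct_tl)
qed



lemma avoid:
  assumes kl: "k_linked V E k" and k1: "k \<ge> 1" and T: "T \<subseteq> V" "finite T" "card T = 2*k-2"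
    and ab: "a \<in> V" "b \<in> V" "a \<noteq> b" "a \<notin> T" "b \<notin> T"
  shows "\<exists>p. dpath V E p \<and> hd p = a \<and> last p = b \<and> set p \<inter> T = {}"
proof -
  obtain xs where xs: "set xs = T" "distinct xs" using T(2) finite_distinct_list by blast
  have lxs: "length xs = 2*k-2" using xs T(3) distinct_card by fastforce
  define x where "x i = (if i = 1 then a else xs!(i-2))" for i :: nat
  define y where "y i = (if i = 1 then b else xs!(k+i-3))" for i :: nat
  have xV: "\<forall>i\<in>{1..k}. x i \<in> V \<and> y i \<in> V"
  proof
    fix i assume i: "i \<in> {1..k}"
    show "x i \<in> V \<and> y i \<in> V"
    proof (cases "i = 1")
      case True then show ?thesis using ab by (simp add: x_def y_def)
    next
      case False
      then have "i-2 < length xs" "k+i-3 < length xs" using i lxs by auto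
      then show ?thesis using False xs T(1) unfolding x_def y_def by (auto dest!: nth_mem)
    qed
  qed
  have injx: "inj_on x {1..k}"
  proof (rule inj_onI)
    fix i j assume i: "i \<in> {1..k}" and j: "j \<in> {1..k}" and e: "x i = x j"
    show "i = j"
    proof (cases "i = 1"; cases "j = 1")
      assume "i = 1" "j \<noteq> 1"
      then have "xs!(j-2) \<in> T" using j lxs xs(1) by (auto intro!: nth_mem)
      then show ?thesis using e \<open>i=1\<close> \<open>j\<noteq>1\<close> ab by (simp add: x_def)
    next
      assume "i \<noteq> 1" "j = 1"
      then have "xs!(i-2) \<in> T" using i lxs xs(1) by (auto intro!: nth_mem)
      then show ?thesis using e \<open>i\<noteq>1\<close> \<open>j=1\<close> ab by (simp add: x_def)
    next
      assume "i \<noteq> 1" "j \<noteq> 1"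
      then have "xs!(i-2) = xs!(j-2)" using e by (simp add: x_def)
      then have "i-2 = j-2" using nth_eq_iff_index_eq[OF xs(2)] i j lxs \<open>i\<noteq>1\<close> \<open>j\<noteq>1\<close> by auto
      then show ?thesis using i j \<open>i\<noteq>1\<close> \<open>j\<noteq>1\<close> by auto
    qed simp
  qed
  have injy: "inj_on y {1..k}"
  proof (rule inj_onI)
    fix i j assume i: "i \<in> {1..k}" and j: "j \<in> {1..k}" and e: "y i = y j"
    show "i = j"
    proof (cases "i = 1"; cases "j = 1")
      assume "i = 1" "j \<noteq> 1"
      then have "xs!(k+j-3) \<in> T" using j lxs xs(1) by (auto intro!: nth_mem)
      then show ?thesis using e \<open>i=1\<close> \<open>j\<noteq>1\<close> ab by (simp add: y_def)
    next
      assume "i \<noteq> 1" "j = 1"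
      then have "xs!(k+i-3) \<in> T" using i lxs xs(1) by (auto intro!: nth_mem)
      then show ?thesis using e \<open>i\<noteq>1\<close> \<open>j=1\<close> ab by (simp add: y_def)
    next
      assume "i \<noteq> 1" "j \<noteq> 1"
      then have "xs!(k+i-3) = xs!(k+j-3)" using e by (simp add: y_def)
      then have "k+i-3 = k+j-3" using nth_eq_iff_index_eq[OF xs(2)] i j lxs \<open>i\<noteq>1\<close> \<open>j\<noteq>1\<close> by auto
      then show ?thesis using i j \<open>i\<noteq>1\<close> \<open>j\<noteq>1\<close> by auto
    qed simp
  qed
  have disj: "x ` {1..k} \<inter> y ` {1..k} = {}"
  proof (rule ccontr)
    assume "x ` {1..k} \<inter> y ` {1..k} \<noteq> {}"
    then obtain i j where i: "i \<in> {1..k}" and j: "j \<in> {1..k}" and e: "x i = y j" by blast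
    show False
    proof (cases "i = 1"; cases "j = 1")
      assume "i = 1" "j = 1" then show False using e ab by (simp add: x_def y_def)
    next
      assume "i = 1" "j \<noteq> 1"
      then have "xs!(k+j-3) \<in> T" using j lxs xs(1) by (auto intro!: nth_mem)
      then show False using e \<open>i=1\<close> \<open>j\<noteq>1\<close> ab by (simp add: x_def y_def)
    next
      assume "i \<noteq> 1" "j = 1"
      then have "xs!(i-2) \<in> T" using i lxs xs(1) by (auto intro!: nth_mem)
      then show False using e \<open>i\<noteq>1\<close> \<open>j=1\<close> ab by (simp add: x_def y_def)
    next
      assume "i \<noteq> 1" "j \<noteq> 1"
      then have "xs!(i-2) = xs!(k+j-3)" using e by (simp add: x_def y_def)
      then have "i-2 = k+j-3" using nth_eq_iff_index_eq[OF xs(2)] i j lxs \<open>i\<noteq>1\<close> \<open>j\<noteq>1\<close> by auto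
      then show False using i j \<open>i\<noteq>1\<close> \<open>j\<noteq>1\<close> by auto
    qed
  qed
  obtain P where P: "\<forall>i\<in>{1..k}. dpath V E (P i) \<and> hd (P i) = x i \<and> last (P i) = y i"
    and Pd: "\<forall>i\<in>{1..k}. \<forall>j\<in>{1..k}. i \<noteq> j \<longrightarrow> set (P i) \<inter> set (P j) = {}"
    using kl xV injx injy disj unfolding k_linked_def by blast
  have "set (P 1) \<inter> T = {}"
  proof (rule ccontr)
    assume "set (P 1) \<inter> T \<noteq> {}"
    then obtain t where t1: "t \<in> set (P 1)" and tT: "t \<in> T" by auto
    then obtain m where m: "m < length xs" "t = xs!m" using xs(1) by (metis in_set_conv_nth)
    show False
    proof (cases "m < k - 1")
      case True
      let ?j = "m+2"
      have j: "?j \<in> {1..k}" "?j \<noteq> 1" using True by auto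
      have "x ?j = t" using m by (simp add: x_def)
      then have "t \<in> set (P ?j)" using P j(1) by (metis dpath_def hd_in_set)
      then show False using Pd j t1 k1 by fastforce
    next
      case False
      let ?j = "m+3-k"
      have j: "?j \<in> {1..k}" "?j \<noteq> 1" using False m lxs by auto
      have "k + ?j - 3 = m" using False by auto
      then have "y ?j = t" using m j by (simp add: y_def)
      then have "t \<in> set (P ?j)" using P j(1) by (metis dpath_def last_in_set)
      then show False using Pd j t1 k1 by fastforce
    qed
  qed
  moreover have "1 \<in> {1..k}" using k1 by simp
  ultimately show ?thesis using P unfolding x_def y_def by (metis (full_types))
qed



lemma choose_T:
  assumes fin: "finite V" and cV: "2*k \<le> card V" and v: "v \<in> V" and Ou: "Ou \<subseteq> V - {v}"
    and cOu: "card Ou \<le> 2*k-2" and k1: "k \<ge> 1"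
  shows "\<exists>y0 T. y0 \<in> V \<and> y0 \<noteq> v \<and> y0 \<notin> T \<and> v \<notin> T \<and> Ou \<subseteq> T \<and> T \<subseteq> V \<and> finite T \<and> card T = 2*k-2"
proof -
  have fOu: "finite Ou" using Ou fin finite_subset by blast
  have "card (insert v Ou) < card V"
  proof -
    have "card (insert v Ou) \<le> card Ou + 1" by (simp add: fOu card_insert_if)
    then show ?thesis using cOu cV k1 by linarith
  qed
  then have "\<not> V \<subseteq> insert v Ou" using fin fOu by (meson card_mono finite_insert leD)
  then obtain y0 where y0: "y0 \<in> V" "y0 \<notin> insert v Ou" by blast
  let ?R = "V - {v, y0} - Ou"
  have cR: "card (V - {v,y0}) = card V - 2" using y0 v fin by (auto simp: card_Diff_subset)
  have "card ?R = card (V - {v,y0}) - card Ou" using Ou y0 fOu by (subst card_Diff_subset) auto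
  then have "2*k-2 - card Ou \<le> card ?R" using cR cV by linarith
  then obtain T0 where T0: "T0 \<subseteq> ?R" "card T0 = 2*k-2 - card Ou" "finite T0"
    by (rule obtain_subset_with_card_n)
  let ?T = "Ou \<union> T0"
  have "card ?T = card Ou + card T0" using T0 fOu by (subst card_Un_disjoint) auto
  then have "card ?T = 2*k-2" using T0 cOu by simp
  then show ?thesis using y0 T0 Ou fOu by (intro exI[of _ y0] exI[of _ ?T]) auto
qed



lemma out_nbr:
  assumes tour: "tournament V E" and kl: "k_linked V E k" and S: "S \<subseteq> V" "v \<in> S" "card S < 2*k"
  shows "\<exists>w\<in>V-S. E v w"
proof (rule ccontr)
  assume na: "\<not> (\<exists>w\<in>V-S. E v w)"
  have fin: "finite V" using tour by (simp add: tournament_def)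
  have fS: "finite S" using S fin finite_subset by blast
  have k1: "k \<ge> 1" using S fS by (cases k) (auto simp: card_gt_0_iff)
  let ?Ou = "{u. E v u}"
  have Ou: "?Ou \<subseteq> S - {v}"
  proof
    fix u assume "u \<in> ?Ou"
    then have "E v u" by simp
    moreover have "\<forall>u v. E u v \<longrightarrow> u \<in> V \<and> v \<in> V" "\<forall>u. \<not> E u u" using tour by (simp_all add: tournament_def)
    ultimately show "u \<in> S - {v}" using na by blast
  qed
  have "card ?Ou \<le> card (S - {v})" using Ou fS by (intro card_mono) auto
  then have cOu: "card ?Ou \<le> 2*k-2" using S fS by simp
  have vV: "v \<in> V" using S by blast
  have cV: "2*k \<le> card V" using kl by (simp add: k_linked_def)
  obtain y0 T where yT: "y0 \<in> V" "y0 \<noteq> v" "y0 \<notin> T" "v \<notin> T" "?Ou \<subseteq> T" "T \<subseteq> V" "finite T" "card T = 2*k-2"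
    using choose_T[OF fin cV _ _ cOu k1] S Ou by blast
  obtain p where p: "dpath V E p" "hd p = v" "last p = y0" "set p \<inter> T = {}"
    using avoid[OF kl k1 yT(6,7,8) vV yT(1) not_sym[OF yT(2)] yT(4) yT(3)] by blast
  have l: "Suc 0 < length p"
    using p yT(2) by (cases p) (auto simp: dpath_def split: if_splits)
  have "E (p!0) (p!1)" using p(1) l by (simp add: dpath_def)
  then have "E v (p!1)" using p(2) l by (cases p) auto
  moreover have "p!1 \<in> set p" using l by simp
  ultimately show False using p(4) yT(5) by blast
qed

lemma in_nbr:
  assumes tour: "tournament V E" and kl: "k_linked V E k" and S: "S \<subseteq> V" "v \<in> S" "card S < 2*k"
  shows "\<exists>w\<in>V-S. E w v"
proof (rule ccontr)
  assume na: "\<not> (\<exists>w\<in>V-S. E w v)"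
  have fin: "finite V" using tour by (simp add: tournament_def)
  have fS: "finite S" using S fin finite_subset by blast
  have k1: "k \<ge> 1" using S fS by (cases k) (auto simp: card_gt_0_iff)
  let ?Ou = "{u. E u v}"
  have Ou: "?Ou \<subseteq> S - {v}"
  proof
    fix u assume "u \<in> ?Ou"
    then have "E u v" by simp
    moreover have "\<forall>u v. E u v \<longrightarrow> u \<in> V \<and> v \<in> V" "\<forall>u. \<not> E u u" using tour by (simp_all add: tournament_def)
    ultimately show "u \<in> S - {v}" using na by blast
  qed
  have "card ?Ou \<le> card (S - {v})" using Ou fS by (intro card_mono) auto
  then have cOu: "card ?Ou \<le> 2*k-2" using S fS by simp
  have vV: "v \<in> V" using S by blast
  have cV: "2*k \<le> card V" using kl by (simp add: k_linked_def)
  obtain y0 T where yT: "y0 \<in> V" "y0 \<noteq> v" "y0 \<notin> T" "v \<notin> T" "?Ou \<subseteq> T" "T \<subseteq> V" "finite T" "card T = 2*k-2"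
    using choose_T[OF fin cV _ _ cOu k1] S Ou by blast
  obtain p where p: "dpath V E p" "hd p = y0" "last p = v" "set p \<inter> T = {}"
    using avoid[OF kl k1 yT(6,7,8) yT(1) vV yT(2) yT(3) yT(4)] by blast
  have l: "Suc (Suc 0) \<le> length p"
    using p yT(2) by (cases p) (auto simp: dpath_def Suc_le_eq split: if_splits)
  define m where "m = length p - 2"
  have "Suc m < length p" using l by (simp add: m_def)
  then have "E (p!m) (p!Suc m)" using p(1) by (simp add: dpath_def)
  moreover have "Suc m = length p - 1" using l by (simp add: m_def)
  ultimately have "E (p!m) v" using p(3) l by (metis last_conv_nth list.size(3) not_less_eq_eq zero_le)
  moreover have "p!m \<in> set p" using l by (simp add: m_def)
  ultimately show False using p(4) yT(5) by blast
qed



definition good :: "'a set \<Rightarrow> ('a \<Rightarrow> 'a \<Rightarrow> bool) \<Rightarrow> nat \<Rightarrow> (nat \<Rightarrow> 'a) \<Rightarrow> (nat \<Rightarrow> 'a) \<Rightarrow> (nat \<Rightarrow> 'a list) \<Rightarrow> bool" where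
  "good V E k x y P \<longleftrightarrow>
     (\<forall>i\<in>{1..k}. dpath V E (P i) \<and> hd (P i) = x i \<and> last (P i) = y i
                   \<and> set (P i) \<inter> (x ` {1..k} \<union> y ` {1..k}) = {x i, y i})
   \<and> (\<forall>i\<in>{1..k}. \<forall>j\<in>{1..k}. i \<noteq> j \<longrightarrow>
                   P i \<noteq> P j \<and> (set (P i) - {x i, y i}) \<inter> set (P j) = {})"

lemma restrict_eq: "A \<inter> S' = B \<Longrightarrow> S \<subseteq> S' \<Longrightarrow> B \<subseteq> S \<Longrightarrow> A \<inter> S = B" by blast
lemma mem_eq: "A \<inter> S' = B \<Longrightarrow> z \<in> A \<Longrightarrow> z \<in> S' \<Longrightarrow> z \<in> B" by blast
lemma mem_eq2: "A \<inter> S' = B \<Longrightarrow> z \<in> B \<Longrightarrow> z \<in> A" by blast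

lemma sub_lem: "(A - B) \<inter> A' = {} \<Longrightarrow> A = A' \<Longrightarrow> A \<subseteq> B" by blast

lemma step_x:
  assumes g: "good V E k (x(i:=w)) y P'" and i: "i \<in> {1..k}"
    and v: "x i \<in> x ` ({1..k} - {i}) \<union> y ` {1..k}"
    and w: "w \<in> V" "w \<notin> x ` {1..k} \<union> y ` {1..k}" and E: "E (x i) w" and xV: "x i \<in> V"
  shows "good V E k x y (P'(i := x i # P' i))"
proof -
  let ?I = "{1..k::nat}"
  let ?x' = "x(i:=w)"
  let ?S = "x ` ?I \<union> y ` ?I"
  let ?S' = "?x' ` ?I \<union> y ` ?I"
  let ?P = "P'(i := x i # P' i)"
  have SS: "?S \<subseteq> ?S'"
  proof
    fix z assume "z \<in> ?S"
    then consider l where "l \<in> ?I" "z = x l" | l where "l \<in> ?I" "z = y l" by blast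
    then show "z \<in> ?S'"
    proof cases
      case 1
      show ?thesis
      proof (cases "l = i")
        case True
        have "x ` ({1..k} - {i}) = ?x' ` ({1..k} - {i})" by (rule image_cong) auto
        then show ?thesis using v 1 True by blast
      next
        case False
        then have "z = ?x' l" using 1 by simp
        then show ?thesis using 1 by blast
      qed
    next
      case 2 then show ?thesis by blast
    qed
  qed
  have wS': "w \<in> ?S'" using i by force
  have G1: "\<And>l. l \<in> ?I \<Longrightarrow> dpath V E (P' l) \<and> hd (P' l) = ?x' l \<and> last (P' l) = y l
                   \<and> set (P' l) \<inter> ?S' = {?x' l, y l}" using g by (simp add: good_def)
  have G2: "\<And>a b. a \<in> ?I \<Longrightarrow> b \<in> ?I \<Longrightarrow> a \<noteq> b \<Longrightarrow> P' a \<noteq> P' b \<and> (set (P' a) - {?x' a, y a}) \<inter> set (P' b) = {}"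
    using g by (simp add: good_def)
  have xS: "\<And>l. l \<in> ?I \<Longrightarrow> x l \<in> ?S" "\<And>l. l \<in> ?I \<Longrightarrow> y l \<in> ?S" by auto
  have wne: "\<And>l. l \<in> ?I \<Longrightarrow> w \<noteq> x l \<and> w \<noteq> y l" using w by auto
  have Pi: "dpath V E (x i # P' i) \<and> hd (x i # P' i) = x i \<and> last (x i # P' i) = y i
             \<and> set (x i # P' i) \<inter> ?S = {x i, y i}"
  proof -
    have d: "dpath V E (P' i)" "hd (P' i) = w" "last (P' i) = y i" "set (P' i) \<inter> ?S' = {w, y i}"
      using G1[OF i] by auto
    have ne: "P' i \<noteq> []" using d(1) by (simp add: dpath_def)
    have hl: "hd (P' i) \<noteq> last (P' i)" using d wne i by auto
    have dist: "distinct (P' i)" using dpath_distinct[OF d(1) hl] .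
    have nb: "x i \<notin> set (butlast (P' i))"
    proof
      assume a: "x i \<in> set (butlast (P' i))"
      then have "x i \<in> set (P' i)" by (meson in_set_butlastD)
      moreover have "x i \<in> ?S'" using SS xS(1)[OF i] by (rule subsetD)
      ultimately have "x i \<in> {w, y i}" by (rule mem_eq[OF d(4)])
      then have "x i = y i" using wne i by auto
      then have "last (P' i) \<in> set (butlast (P' i))" using a d(3) by simp
      moreover have "distinct (butlast (P' i) @ [last (P' i)])" using dist ne by simp
      ultimately show False by simp
    qed
    have "dpath V E (x i # P' i)" using dpath_cons[OF d(1) xV] E d(2) hl nb by simp
    moreover have "last (x i # P' i) = y i" using ne d(3) by simp
    moreover have "set (P' i) \<inter> ?S = {y i}"
    proof
      show "set (P' i) \<inter> ?S \<subseteq> {y i}"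
      proof
        fix z assume z: "z \<in> set (P' i) \<inter> ?S"
        then have "z \<in> ?S'" using SS by blast
        then have "z \<in> {w, y i}" using z by (intro mem_eq[OF d(4)]) auto
        moreover have "z \<noteq> w" using w(2) z by blast
        ultimately show "z \<in> {y i}" by blast
      qed
      have "y i \<in> set (P' i)" by (rule mem_eq2[OF d(4)]) simp
      then show "{y i} \<subseteq> set (P' i) \<inter> ?S" using xS(2)[OF i] by blast
    qed
    then have s4: "set (x i # P' i) \<inter> ?S = {x i, y i}" using xS(1)[OF i] by (simp only: list.set Int_insert_left_if1 insert_absorb2 insert_commute)
    have h: "hd (x i # P' i) = x i" by simp
    show ?thesis using calculation h s4 by (intro conjI) assumption+
  qed
  have Pl: "\<And>l. l \<in> ?I \<Longrightarrow> l \<noteq> i \<Longrightarrow> dpath V E (P' l) \<and> hd (P' l) = x l \<and> last (P' l) = y l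
             \<and> set (P' l) \<inter> ?S = {x l, y l}"
  proof -
    fix l assume l: "l \<in> ?I" "l \<noteq> i"
    have xl: "?x' l = x l" using l(2) by (rule fun_upd_other)
    note g = G1[OF l(1)]
    note g1 = conjunct1[OF g] conjunct1[OF conjunct2[OF g]] conjunct1[OF conjunct2[OF conjunct2[OF g]]] conjunct2[OF conjunct2[OF conjunct2[OF g]]]
    have "set (P' l) \<inter> ?S' = {x l, y l}" using g1(4) unfolding xl .
    then have "set (P' l) \<inter> ?S = {x l, y l}" using xS[OF l(1)] by (intro restrict_eq[OF _ SS]) simp_all
    then show "dpath V E (P' l) \<and> hd (P' l) = x l \<and> last (P' l) = y l
             \<and> set (P' l) \<inter> ?S = {x l, y l}" using g1(1,2,3) xl by simp
  qed
  have part1: "\<forall>l\<in>?I. dpath V E (?P l) \<and> hd (?P l) = x l \<and> last (?P l) = y l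
                   \<and> set (?P l) \<inter> ?S = {x l, y l}"
  proof
    fix l assume l: "l \<in> ?I"
    show "dpath V E (?P l) \<and> hd (?P l) = x l \<and> last (?P l) = y l \<and> set (?P l) \<inter> ?S = {x l, y l}"
    proof (cases "l = i")
      case True then show ?thesis using Pi by (simp only: True fun_upd_same)
    next
      case False then show ?thesis using Pl[OF l False] by (simp only: fun_upd_other[OF False])
    qed
  qed
  have disj: "\<And>a b. a \<in> ?I \<Longrightarrow> b \<in> ?I \<Longrightarrow> a \<noteq> b \<Longrightarrow> (set (?P a) - {x a, y a}) \<inter> set (?P b) = {}"
  proof -
    fix a b assume ab: "a \<in> ?I" "b \<in> ?I" "a \<noteq> b"
    show "(set (?P a) - {x a, y a}) \<inter> set (?P b) = {}"
    proof (cases "a = i")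
      case True
      then have bi: "b \<noteq> i" using ab by simp
      have "w \<notin> set (P' b)"
      proof
        assume "w \<in> set (P' b)"
        then have "w \<in> {?x' b, y b}" using G1[OF ab(2)] wS' by blast
        then show False using wne[OF ab(2)] bi by auto
      qed
      then show ?thesis using G2[OF ab] True bi by auto
    next
      case False
      note ai = False
      show ?thesis
      proof (cases "b = i")
        case True
        have "x i \<notin> set (P' a) - {x a, y a}"
        proof
          assume "x i \<in> set (P' a) - {x a, y a}"
          moreover have "x i \<in> ?S'" using SS xS(1)[OF i] by blast
          moreover have "set (P' a) \<inter> ?S' = {x a, y a}" using G1[OF ab(1)] ai by simp
          ultimately show False by blast
        qed
        then show ?thesis using G2[OF ab] True ai by auto
      next
        case False
        then show ?thesis using G2[OF ab] ai by auto
      qed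
    qed
  qed
  have neq: "\<And>a b. a \<in> ?I \<Longrightarrow> b \<in> ?I \<Longrightarrow> a \<noteq> b \<Longrightarrow> ?P a \<noteq> ?P b"
  proof -
    fix a b assume ab: "a \<in> ?I" "b \<in> ?I" "a \<noteq> b"
    show "?P a \<noteq> ?P b"
    proof (cases "a = i \<or> b = i")
      case False then show ?thesis using G2[OF ab] by auto
    next
      case True
      note gi = G1[OF i]
      have "P' i \<noteq> []" using conjunct1[OF gi] by (simp add: dpath_def)
      moreover have "hd (P' i) = w" using conjunct1[OF conjunct2[OF gi]] by simp
      ultimately have wPi: "w \<in> set (?P i)" by (metis fun_upd_same hd_in_set list.set_intros(2))
      show ?thesis
      proof
        assume e: "?P a = ?P b"
        have es: "set (?P a) = set (?P b)" using e by (rule arg_cong)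
        have s1: "set (?P a) \<subseteq> {x a, y a}" using disj[OF ab] es by (rule sub_lem)
        have s2: "set (?P b) \<subseteq> {x b, y b}" using disj[OF ab(2,1)] ab(3) es[symmetric] by (intro sub_lem) simp_all
        have "w \<in> set (?P a)" using True wPi e by metis
        then show False using s1 wne[OF ab(1)] by blast
      qed
    qed
  qed
  have part2: "\<forall>a\<in>?I. \<forall>b\<in>?I. a \<noteq> b \<longrightarrow> ?P a \<noteq> ?P b \<and> (set (?P a) - {x a, y a}) \<inter> set (?P b) = {}"
    using disj neq by blast
  show ?thesis unfolding good_def using part1 part2 by (rule conjI)
qed



lemma tl_rev': "tl (rev xs) = rev (butlast xs)"
  by (metis butlast_rev rev_rev_ident)

lemma dpath_rev:
  assumes "dpath V E p" shows "dpath V (\<lambda>a b. E b a) (rev p)"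
proof -
  have arcs: "\<forall>i. Suc i < length (rev p) \<longrightarrow> E (rev p ! Suc i) (rev p ! i)"
  proof (intro allI impI)
    fix i assume i: "Suc i < length (rev p)"
    let ?n = "length p"
    have j: "Suc (?n - Suc (Suc i)) < ?n" using i by simp
    have "E (p ! (?n - Suc (Suc i))) (p ! Suc (?n - Suc (Suc i)))" using assms j by (simp add: dpath_def)
    moreover have "Suc (?n - Suc (Suc i)) = ?n - Suc i" using i by simp
    ultimately show "E (rev p ! Suc i) (rev p ! i)" using i by (simp add: rev_nth)
  qed
  show ?thesis using assms arcs by (simp add: dpath_def tl_rev')
qed

lemma good_rev:
  assumes "good V E k x y P" shows "good V (\<lambda>a b. E b a) k y x (\<lambda>i. rev (P i))"
proof -
  have "\<forall>i\<in>{1..k}. dpath V (\<lambda>a b. E b a) (rev (P i)) \<and> hd (rev (P i)) = y i \<and> last (rev (P i)) = x i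
                   \<and> set (rev (P i)) \<inter> (y ` {1..k} \<union> x ` {1..k}) = {y i, x i}"
    using assms unfolding good_def by (auto simp: hd_rev last_rev dpath_rev Un_commute insert_commute)
  moreover have "\<forall>i\<in>{1..k}. \<forall>j\<in>{1..k}. i \<noteq> j \<longrightarrow>
                   rev (P i) \<noteq> rev (P j) \<and> (set (rev (P i)) - {y i, x i}) \<inter> set (rev (P j)) = {}"
    using assms unfolding good_def by (auto simp: insert_commute)
  ultimately show ?thesis unfolding good_def by blast
qed

lemma step_y:
  assumes g: "good V E k x (y(i:=w)) P'" and i: "i \<in> {1..k}"
    and v: "y i \<in> x ` {1..k} \<union> y ` ({1..k} - {i})"
    and w: "w \<in> V" "w \<notin> x ` {1..k} \<union> y ` {1..k}" and E: "E w (y i)" and yV: "y i \<in> V"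
  shows "good V E k x y (P'(i := P' i @ [y i]))"
proof -
  have g1: "good V (\<lambda>a b. E b a) k (y(i:=w)) x (\<lambda>j. rev (P' j))" using good_rev[OF g] .
  have g2: "good V (\<lambda>a b. E b a) k y x ((\<lambda>j. rev (P' j))(i := y i # (\<lambda>j. rev (P' j)) i))"
    by (rule step_x[OF g1 i]) (use v w E yV in auto)
  have g3: "good V (\<lambda>a b. E a b) k x y (\<lambda>j. rev (((\<lambda>j. rev (P' j))(i := y i # (\<lambda>j. rev (P' j)) i)) j))"
    using good_rev[OF g2] by simp
  have "(\<lambda>j. rev (((\<lambda>j. rev (P' j))(i := y i # (\<lambda>j. rev (P' j)) i)) j)) = P'(i := P' i @ [y i])"
    by (rule ext) simp
  then show ?thesis using g3 by simp
qed



lemma base_good: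
  assumes kl: "k_linked V E k" and xV: "\<forall>i\<in>{1..k}. x i \<in> V \<and> y i \<in> V"
    and ix: "inj_on x {1..k}" and iy: "inj_on y {1..k}" and d: "x ` {1..k} \<inter> y ` {1..k} = {}"
  shows "\<exists>P. good V E k x y P"
proof -
  obtain P where P: "\<forall>i\<in>{1..k}. dpath V E (P i) \<and> hd (P i) = x i \<and> last (P i) = y i"
    and Pd: "\<forall>i\<in>{1..k}. \<forall>j\<in>{1..k}. i \<noteq> j \<longrightarrow> set (P i) \<inter> set (P j) = {}"
    using kl xV ix iy d unfolding k_linked_def by blast
  have hl: "\<And>i. i \<in> {1..k} \<Longrightarrow> x i \<in> set (P i) \<and> y i \<in> set (P i)"
    using P by (metis dpath_def hd_in_set last_in_set)
  have ne: "\<And>i. i \<in> {1..k} \<Longrightarrow> P i \<noteq> []" using P by (simp add: dpath_def)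
  have S: "\<forall>i\<in>{1..k}. set (P i) \<inter> (x ` {1..k} \<union> y ` {1..k}) = {x i, y i}"
  proof
    fix i assume i: "i \<in> {1..k}"
    show "set (P i) \<inter> (x ` {1..k} \<union> y ` {1..k}) = {x i, y i}"
    proof
      show "set (P i) \<inter> (x ` {1..k} \<union> y ` {1..k}) \<subseteq> {x i, y i}"
      proof
        fix z assume z: "z \<in> set (P i) \<inter> (x ` {1..k} \<union> y ` {1..k})"
        then obtain j where j: "j \<in> {1..k}" "z = x j \<or> z = y j" by blast
        show "z \<in> {x i, y i}"
        proof (cases "j = i")
          case True then show ?thesis using j by auto
        next
          case False
          then have "z \<in> set (P j)" using hl[OF j(1)] j(2) by auto
          then show ?thesis using Pd i j(1) False z by blast
        qed
      qed
      show "{x i, y i} \<subseteq> set (P i) \<inter> (x ` {1..k} \<union> y ` {1..k})" using hl[OF i] i by blast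
    qed
  qed
  have D: "\<forall>i\<in>{1..k}. \<forall>j\<in>{1..k}. i \<noteq> j \<longrightarrow> P i \<noteq> P j \<and> (set (P i) - {x i, y i}) \<inter> set (P j) = {}"
  proof (intro ballI impI conjI)
    fix i j assume ij: "i \<in> {1..k}" "j \<in> {1..k}" "i \<noteq> j"
    show "(set (P i) - {x i, y i}) \<inter> set (P j) = {}" using Pd ij by blast
    show "P i \<noteq> P j"
    proof
      assume "P i = P j"
      then have "set (P i) = {}" using Pd ij by (metis Int_absorb)
      then show False using ne[OF ij(1)] by simp
    qed
  qed
  show ?thesis unfolding good_def using P S D by blast
qed

lemma card_I: "card (x ` {1..k::nat}) \<le> k" using card_image_le[of "{1..k}" x] by simp

lemma main_lemma:
  assumes tour: "tournament V E" and kl: "k_linked V E k"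
  shows "\<forall>i\<in>{1..k}. x i \<in> V \<and> y i \<in> V \<Longrightarrow> \<exists>P. good V E k x y P"
proof -
  have fin: "finite V" using tour by (simp add: tournament_def)
  have "\<forall>x y. (\<forall>i\<in>{1..k}. x i \<in> V \<and> y i \<in> V) \<longrightarrow> 2*k - card (x ` {1..k} \<union> y ` {1..k}) = m
           \<longrightarrow> (\<exists>P. good V E k x y P)" for m
  proof (induction m rule: less_induct)
    case (less m)
    show ?case
    proof (intro allI impI)
      fix x y :: "nat \<Rightarrow> 'a"
      assume xV: "\<forall>i\<in>{1..k}. x i \<in> V \<and> y i \<in> V"
        and m: "2*k - card (x ` {1..k} \<union> y ` {1..k}) = m"
      let ?I = "{1..k::nat}"
      let ?S = "x ` ?I \<union> y ` ?I"
      have SV: "?S \<subseteq> V" using xV by blast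
      have fS: "finite ?S" by simp
      show "\<exists>P. good V E k x y P"
      proof (cases "\<exists>i\<in>?I. x i \<in> x ` (?I - {i}) \<union> y ` ?I")
        case True
        then obtain i where i: "i \<in> ?I" and v: "x i \<in> x ` (?I - {i}) \<union> y ` ?I" by blast
        have Seq: "?S = x ` (?I - {i}) \<union> y ` ?I" using i v by blast
        have "card (x ` (?I - {i})) \<le> card (?I - {i})" by (rule card_image_le) simp
        then have "card (x ` (?I - {i})) \<le> k - 1" using i by simp
        moreover have "card (x ` (?I - {i}) \<union> y ` ?I) \<le> card (x ` (?I - {i})) + card (y ` ?I)"
          by (rule card_Un_le)
        ultimately have cS: "card ?S < 2*k" using Seq card_I[of y k] i by auto
        obtain w where w: "w \<in> V - ?S" "E (x i) w" using out_nbr[OF tour kl SV _ cS] i by blast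
        let ?x' = "x(i:=w)"
        have S'eq: "?x' ` ?I \<union> y ` ?I = insert w ?S"
        proof
          show "?x' ` ?I \<union> y ` ?I \<subseteq> insert w ?S" by auto
          have "x ` (?I - {i}) = ?x' ` (?I - {i})" by (rule image_cong) auto
          then show "insert w ?S \<subseteq> ?x' ` ?I \<union> y ` ?I" using Seq i by auto
        qed
        have "card (insert w ?S) = Suc (card ?S)" using w(1) fS by simp
        then have lt: "2*k - card (?x' ` ?I \<union> y ` ?I) < m" using S'eq m cS by simp
        have xV': "\<forall>j\<in>?I. ?x' j \<in> V \<and> y j \<in> V" using xV w(1) by auto
        obtain P' where P': "good V E k ?x' y P'" using less.IH[OF lt] xV' by blast
        have "good V E k x y (P'(i := x i # P' i))"
          by (rule step_x[OF P' i v]) (use w xV i in auto)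
        then show ?thesis by blast
      next
        case nA: False
        show ?thesis
        proof (cases "\<exists>i\<in>?I. y i \<in> y ` (?I - {i})")
          case True
          then obtain i where i: "i \<in> ?I" and v0: "y i \<in> y ` (?I - {i})" by blast
          have v: "y i \<in> x ` ?I \<union> y ` (?I - {i})" using v0 by blast
          have Seq: "?S = x ` ?I \<union> y ` (?I - {i})" using i v by blast
          have "card (y ` (?I - {i})) \<le> card (?I - {i})" by (rule card_image_le) simp
          then have "card (y ` (?I - {i})) \<le> k - 1" using i by simp
          moreover have "card (x ` ?I \<union> y ` (?I - {i})) \<le> card (x ` ?I) + card (y ` (?I - {i}))"
            by (rule card_Un_le)
          ultimately have cS: "card ?S < 2*k" using Seq card_I[of x k] i by auto
          obtain w where w: "w \<in> V - ?S" "E w (y i)" using in_nbr[OF tour kl SV _ cS] i by blast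
          let ?y' = "y(i:=w)"
          have S'eq: "x ` ?I \<union> ?y' ` ?I = insert w ?S"
          proof
            show "x ` ?I \<union> ?y' ` ?I \<subseteq> insert w ?S" by auto
            have "y ` (?I - {i}) = ?y' ` (?I - {i})" by (rule image_cong) auto
            then show "insert w ?S \<subseteq> x ` ?I \<union> ?y' ` ?I" using Seq i by auto
          qed
          have "card (insert w ?S) = Suc (card ?S)" using w(1) fS by simp
          then have lt: "2*k - card (x ` ?I \<union> ?y' ` ?I) < m" using S'eq m cS by simp
          have xV': "\<forall>j\<in>?I. x j \<in> V \<and> ?y' j \<in> V" using xV w(1) by auto
          obtain P' where P': "good V E k x ?y' P'" using less.IH[OF lt] xV' by blast
          have "good V E k x y (P'(i := P' i @ [y i]))"
            by (rule step_y[OF P' i v]) (use w xV i in auto)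
          then show ?thesis by blast
        next
          case nB: False
          have ix: "inj_on x ?I"
          proof (rule inj_onI)
            fix a b assume ab: "a \<in> ?I" "b \<in> ?I" "x a = x b"
            show "a = b"
            proof (rule ccontr)
              assume "a \<noteq> b"
              then have "x a \<in> x ` (?I - {a})" using ab by auto
              then show False using nA ab(1) by blast
            qed
          qed
          have iy: "inj_on y ?I"
          proof (rule inj_onI)
            fix a b assume ab: "a \<in> ?I" "b \<in> ?I" "y a = y b"
            show "a = b"
            proof (rule ccontr)
              assume "a \<noteq> b"
              then have "y a \<in> y ` (?I - {a})" using ab by auto
              then show False using nB ab(1) by blast
            qed
          qed
          have d: "x ` ?I \<inter> y ` ?I = {}" using nA by blast
          show ?thesis using base_good[OF kl xV ix iy d] .
        qed
      qed
    qed
  qed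
  then show "\<forall>i\<in>{1..k}. x i \<in> V \<and> y i \<in> V \<Longrightarrow> \<exists>P. good V E k x y P" by blast
qed



theorem proposition2p1:
  fixes V :: "'a set" and E :: "'a \<Rightarrow> 'a \<Rightarrow> bool" and k :: nat
  assumes "tournament V E"
  shows "k_linked V E k \<longleftrightarrow>
    (2 * k \<le> card V
     \<and> (\<forall>x y :: nat \<Rightarrow> 'a.
          (\<forall>i\<in>{1..k}. x i \<in> V \<and> y i \<in> V)
          \<longrightarrow> (\<exists>P :: nat \<Rightarrow> 'a list.
                (\<forall>i\<in>{1..k}. dpath V E (P i) \<and> hd (P i) = x i \<and> last (P i) = y i
                   \<and> set (P i) \<inter> (x ` {1..k} \<union> y ` {1..k}) = {x i, y i})
              \<and> (\<forall>i\<in>{1..k}. \<forall>j\<in>{1..k}. i \<noteq> j \<longrightarrow>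
                   P i \<noteq> P j \<and> (set (P i) - {x i, y i}) \<inter> set (P j) = {}))))"
proof
  assume kl: "k_linked V E k"
  show "2 * k \<le> card V
     \<and> (\<forall>x y :: nat \<Rightarrow> 'a.
          (\<forall>i\<in>{1..k}. x i \<in> V \<and> y i \<in> V)
          \<longrightarrow> (\<exists>P :: nat \<Rightarrow> 'a list.
                (\<forall>i\<in>{1..k}. dpath V E (P i) \<and> hd (P i) = x i \<and> last (P i) = y i
                   \<and> set (P i) \<inter> (x ` {1..k} \<union> y ` {1..k}) = {x i, y i})
              \<and> (\<forall>i\<in>{1..k}. \<forall>j\<in>{1..k}. i \<noteq> j \<longrightarrow>
                   P i \<noteq> P j \<and> (set (P i) - {x i, y i}) \<inter> set (P j) = {})))"
  proof (intro conjI allI impI)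
    show "2 * k \<le> card V" using kl by (simp add: k_linked_def)
  next
    fix x y :: "nat \<Rightarrow> 'a" assume "\<forall>i\<in>{1..k}. x i \<in> V \<and> y i \<in> V"
    then obtain P where "good V E k x y P" using main_lemma[OF assms kl] by blast
    then show "\<exists>P :: nat \<Rightarrow> 'a list.
                (\<forall>i\<in>{1..k}. dpath V E (P i) \<and> hd (P i) = x i \<and> last (P i) = y i
                   \<and> set (P i) \<inter> (x ` {1..k} \<union> y ` {1..k}) = {x i, y i})
              \<and> (\<forall>i\<in>{1..k}. \<forall>j\<in>{1..k}. i \<noteq> j \<longrightarrow>
                   P i \<noteq> P j \<and> (set (P i) - {x i, y i}) \<inter> set (P j) = {})"
      unfolding good_def by blast
  qed
next
  assume R: "2 * k \<le> card V
     \<and> (\<forall>x y :: nat \<Rightarrow> 'a.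
          (\<forall>i\<in>{1..k}. x i \<in> V \<and> y i \<in> V)
          \<longrightarrow> (\<exists>P :: nat \<Rightarrow> 'a list.
                (\<forall>i\<in>{1..k}. dpath V E (P i) \<and> hd (P i) = x i \<and> last (P i) = y i
                   \<and> set (P i) \<inter> (x ` {1..k} \<union> y ` {1..k}) = {x i, y i})
              \<and> (\<forall>i\<in>{1..k}. \<forall>j\<in>{1..k}. i \<noteq> j \<longrightarrow>
                   P i \<noteq> P j \<and> (set (P i) - {x i, y i}) \<inter> set (P j) = {})))"
  show "k_linked V E k"
    unfolding k_linked_def
  proof (intro conjI allI impI)
    show "2 * k \<le> card V" using R by simp
  next
    fix x y :: "nat \<Rightarrow> 'a"
    assume H: "(\<forall>i\<in>{1..k}. x i \<in> V \<and> y i \<in> V) \<and> inj_on x {1..k} \<and> inj_on y {1..k} \<and> x ` {1..k} \<inter> y ` {1..k} = {}"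
    then obtain P where P1: "\<forall>i\<in>{1..k}. dpath V E (P i) \<and> hd (P i) = x i \<and> last (P i) = y i
                   \<and> set (P i) \<inter> (x ` {1..k} \<union> y ` {1..k}) = {x i, y i}"
      and P2: "\<forall>i\<in>{1..k}. \<forall>j\<in>{1..k}. i \<noteq> j \<longrightarrow>
                   P i \<noteq> P j \<and> (set (P i) - {x i, y i}) \<inter> set (P j) = {}"
      using mp[OF conjunct2[OF R, THEN spec[of _ x], THEN spec[of _ y]] conjunct1[OF H]] by (elim exE conjE)
    note H2 = conjunct2[OF H]
    note ix = conjunct1[OF H2] and iy = conjunct1[OF conjunct2[OF H2]] and dxy = conjunct2[OF conjunct2[OF H2]]
    have D: "\<forall>i\<in>{1..k}. \<forall>j\<in>{1..k}. i \<noteq> j \<longrightarrow> set (P i) \<inter> set (P j) = {}"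
    proof (intro ballI impI)
      fix i j assume ij: "i \<in> {1..k}" "j \<in> {1..k}" "i \<noteq> j"
      show "set (P i) \<inter> set (P j) = {}"
      proof (rule ccontr)
        assume "set (P i) \<inter> set (P j) \<noteq> {}"
        then obtain z where z: "z \<in> set (P i)" "z \<in> set (P j)" by blast
        have p2: "(set (P i) - {x i, y i}) \<inter> set (P j) = {}" using P2[rule_format, OF ij] by (rule conjunct2)
        have "z \<in> {x i, y i}" using p2 z by blast
        then have zS: "z \<in> x ` {1..k} \<union> y ` {1..k}" using ij by blast
        note p1 = P1[rule_format, OF ij(2)]
        have "z \<in> {x j, y j}" by (rule mem_eq[OF conjunct2[OF conjunct2[OF conjunct2[OF p1]]] z(2) zS])
        moreover have "x i \<noteq> x j" using inj_onD[OF ix _ ij(1,2)] ij(3) by blast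
        moreover have "y i \<noteq> y j" using inj_onD[OF iy _ ij(1,2)] ij(3) by blast
        moreover have "x i \<noteq> y j" using dxy ij(1,2) by blast
        moreover have "y i \<noteq> x j" using dxy ij(1,2) by blast
        ultimately show False using \<open>z \<in> {x i, y i}\<close> by auto
      qed
    qed
    show "\<exists>P. (\<forall>i\<in>{1..k}. dpath V E (P i) \<and> hd (P i) = x i \<and> last (P i) = y i)
              \<and> (\<forall>i\<in>{1..k}. \<forall>j\<in>{1..k}. i \<noteq> j \<longrightarrow> set (P i) \<inter> set (P j) = {})"
    proof (rule exI, rule conjI, intro ballI)
      fix i assume i: "i \<in> {1..k}"
      note p = P1[rule_format, OF i]
      show "dpath V E (P i) \<and> hd (P i) = x i \<and> last (P i) = y i"
        by (rule conjI[OF conjunct1[OF p] conjI[OF conjunct1[OF conjunct2[OF p]] conjunct1[OF conjunct2[OF conjunct2[OF p]]]]])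
    next
      show "\<forall>i\<in>{1..k}. \<forall>j\<in>{1..k}. i \<noteq> j \<longrightarrow> set (P i) \<inter> set (P j) = {}" by (rule D)
    qed
  qed
qed

end
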